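(* Let $\mathbb{F}$ be the countable fan and $\mathsf{2}$ the discrete space $\{\mathtt{0},\mathtt{1}\}$. Let $(h_n)_n$ converge to $h_\infty$ in $\mathsf{2}^{\mathbb{N}\times\mathbb{F}}$. Then for every $k\in\mathbb{N}$ there exists $m\in\mathbb{N}$ such that $h_n(k,a,b)=h_\infty(k,\infty,\infty)$ for all $n\ge m$ (including $n=\infty$), all $a\ge m$ and all $b\in\mathbb{N}$.
   Context: The countable fan $\mathbb{F}$ has underlying set $\mathbb{N}^2\cup\{(\infty,\infty)\}$ and the metric $d((a,b),(\infty,\infty))=2^{-a}$, $d((a,b),(a',b'))=\max\{2^{-a},2^{-a'}\}$ for distinct $(a,b),(a',b')\in\mathbb{N}^2$. $\mathbb{N}$ is discrete. $\mathsf{2}^{\mathbb{N}\times\mathbb{F}}$ is the exponential in the category QCB (quotients of countably based spaces): the set of continuous maps $\mathbb{N}\times\mathbb{F}\to\mathsf{2}$ with the sequentialisation of the compact-open topology. *)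

theory Defs
  imports "HOL-Analysis.Analysis"
begin

text \<open>Points of the countable fan: Pt a b is (a,b) in N^2, Top is (infinity,infinity).\<close>
datatype fanpt = Pt nat nat | Top

fun fan_dist :: "fanpt \<Rightarrow> fanpt \<Rightarrow> real" where
  "fan_dist Top Top = 0"
| "fan_dist (Pt a b) Top = (1/2) ^ a"
| "fan_dist Top (Pt a b) = (1/2) ^ a"
| "fan_dist (Pt a b) (Pt a' b') =
     (if (a, b) = (a', b') then 0 else max ((1/2) ^ a) ((1/2) ^ a'))"

definition fan_topology :: "fanpt topology" where
  "fan_topology = Metric_space.mtopology UNIV fan_dist"

definition NxF :: "(nat \<times> fanpt) topology" where
  "NxF = prod_topology (discrete_topology UNIV) fan_topology"

definition two :: "bool topology" where
  "two = discrete_topology UNIV"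

definition compact_open :: "'a topology \<Rightarrow> 'b topology \<Rightarrow> ('a \<Rightarrow> 'b) topology" where
  "compact_open X Y =
     subtopology
       (topology_generated_by {{f. f ` K \<subseteq> U} | K U. compactin X K \<and> openin Y U})
       {f. continuous_map X Y f}"

definition seq_open :: "'a topology \<Rightarrow> 'a set \<Rightarrow> bool" where
  "seq_open T U \<longleftrightarrow> U \<subseteq> topspace T \<and>
     (\<forall>x l. limitin T x l sequentially \<and> l \<in> U \<longrightarrow> (\<forall>\<^sub>F n in sequentially. x n \<in> U))"

definition sequentialisation :: "'a topology \<Rightarrow> 'a topology" where
  "sequentialisation T = topology (seq_open T)"

definition qcb_exp :: "'a topology \<Rightarrow> 'b topology \<Rightarrow> ('a \<Rightarrow> 'b) topology" where
  "qcb_exp X Y = sequentialisation (compact_open X Y)"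

end

theory Submission
  imports Defs
begin

fun fw :: "fanpt \<Rightarrow> real" where
  "fw Top = 0" | "fw (Pt a b) = (1/2)^a"

lemma half_pow_not_le0 [simp]: "\<not> ((1/2::real)^a \<le> 0)"
  using zero_less_power[of "1/2::real" a] by linarith

lemma fw_nonneg: "0 \<le> fw x" by (cases x) auto

lemma fan_dist_fw: "fan_dist x y = (if x = y then 0 else max (fw x) (fw y))"
  by (cases x; cases y) (auto simp: max_def)

lemma fan_metric: "Metric_space UNIV fan_dist"
proof
  fix x y show "0 \<le> fan_dist x y" unfolding fan_dist_fw using fw_nonneg[of x] by auto
  show "fan_dist x y = fan_dist y x" unfolding fan_dist_fw by (auto simp: max.commute)
  show "fan_dist x y = 0 \<longleftrightarrow> x = y"
    unfolding fan_dist_fw by (cases x; cases y) (auto simp: max_def)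
next
  fix x y z
  show "fan_dist x z \<le> fan_dist x y + fan_dist y z"
    unfolding fan_dist_fw using fw_nonneg[of x] fw_nonneg[of y] fw_nonneg[of z]
    by (auto simp: max_def)
qed

interpretation F: Metric_space UNIV fan_dist by (rule fan_metric)

lemma istop_seq: "istopology (seq_open T)"
proof -
  have 1: "seq_open T (S \<inter> U)" if "seq_open T S" "seq_open T U" for S U
    using that unfolding seq_open_def by (auto simp: eventually_conj_iff)
  have 2: "seq_open T (\<Union>K)" if A: "\<forall>U\<in>K. seq_open T U" for K
    unfolding seq_open_def
  proof (intro conjI allI impI)
    show "\<Union>K \<subseteq> topspace T" using A by (auto simp: seq_open_def)
  next
    fix x l assume "limitin T x l sequentially \<and> l \<in> \<Union>K"
    then obtain U where "U \<in> K" "l \<in> U" "limitin T x l sequentially" by blast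
    with A have "\<forall>\<^sub>F n in sequentially. x n \<in> U" by (auto simp: seq_open_def)
    then show "\<forall>\<^sub>F n in sequentially. x n \<in> \<Union>K"
      by (rule eventually_mono) (use \<open>U \<in> K\<close> in blast)
  qed
  show ?thesis unfolding istopology_def using 1 2 by blast
qed

lemma openin_seq: "openin (sequentialisation T) W = seq_open T W"
  unfolding sequentialisation_def by (simp add: istop_seq)

lemma seq_lim:
  assumes "limitin (sequentialisation T) h l sequentially" "openin T W" "l \<in> W"
  shows "\<forall>\<^sub>F n in sequentially. h n \<in> W"
proof -
  have "seq_open T W" unfolding seq_open_def
    using assms(2) openin_subset by (auto simp: limitin_def)
  then have "openin (sequentialisation T) W" by (simp add: openin_seq)
  then show ?thesis using assms unfolding limitin_def by blast
qed

lemma seq_topspace: "topspace (sequentialisation T) \<subseteq> topspace T"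
proof
  fix x assume "x \<in> topspace (sequentialisation T)"
  then obtain S where "openin (sequentialisation T) S" "x \<in> S" unfolding topspace_def by blast
  then show "x \<in> topspace T" by (auto simp: openin_seq seq_open_def)
qed

lemma pow_small: "(r::real) > 0 \<Longrightarrow> \<exists>N. \<forall>a\<ge>N. (1/2::real)^a < r"
proof -
  assume "r > 0"
  then obtain N where N: "(1/2::real)^N < r" using real_arch_pow_inv[of r "1/2"] by auto
  have "\<forall>a\<ge>N. (1/2::real)^a < r"
  proof (intro allI impI)
    fix a assume "N \<le> a"
    then have "(1/2::real)^a \<le> (1/2)^N" by (intro power_decreasing) auto
    then show "(1/2::real)^a < r" using N by linarith
  qed
  then show ?thesis by blast
qed

theorem lemma3p5:
  fixes h :: "nat \<Rightarrow> (nat \<times> fanpt \<Rightarrow> bool)" and hinf :: "nat \<times> fanpt \<Rightarrow> bool"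
  assumes "\<And>n. h n \<in> topspace (qcb_exp NxF two)"
    and "hinf \<in> topspace (qcb_exp NxF two)"
    and "limitin (qcb_exp NxF two) h hinf sequentially"
  shows "\<forall>k. \<exists>m. \<forall>a\<ge>m. \<forall>b.
           (\<forall>n\<ge>m. h n (k, Pt a b) = hinf (k, Top)) \<and> hinf (k, Pt a b) = hinf (k, Top)"
proof
  fix k
  define c where "c = hinf (k, Top)"
  have topF: "topspace fan_topology = UNIV" unfolding fan_topology_def by simp
  have topN: "topspace NxF = UNIV" unfolding NxF_def by (simp add: topF)
  have hc: "continuous_map NxF two hinf"
    using assms(2) seq_topspace[of "compact_open NxF two"]
    unfolding qcb_exp_def compact_open_def by auto
  obtain N where N: "\<And>a b. a \<ge> N \<Longrightarrow> hinf (k, Pt a b) = c"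
  proof -
    have "openin NxF {x \<in> topspace NxF. hinf x \<in> {c}}"
      using hc unfolding continuous_map_def two_def by (metis openin_discrete_topology subset_UNIV)
    then have "openin NxF {x. hinf x = c}" by (simp add: topN)
    moreover have "(k, Top) \<in> {x. hinf x = c}" by (simp add: c_def)
    ultimately obtain U V where UV: "openin fan_topology V" "Top \<in> V" "k \<in> U"
      "U \<times> V \<subseteq> {x. hinf x = c}"
      unfolding NxF_def openin_prod_topology_alt by blast
    then obtain r where r: "r > 0" "F.mball Top r \<subseteq> V"
      unfolding fan_topology_def F.openin_mtopology by blast
    obtain N where "\<forall>a\<ge>N. (1/2::real)^a < r" using pow_small[OF r(1)] by blast
    have "\<And>a b. a \<ge> N \<Longrightarrow> hinf (k, Pt a b) = c"
    proof -
      fix a b assume "a \<ge> N"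
      then have "(1/2::real)^a < r" using \<open>\<forall>a\<ge>N. (1/2::real)^a < r\<close> by blast
      then have "Pt a b \<in> F.mball Top r" by simp
      then have "(k, Pt a b) \<in> U \<times> V" using r(2) UV(3) by blast
      then show "hinf (k, Pt a b) = c" using UV(4) by blast
    qed
    then show ?thesis using that by blast
  qed
  show "\<exists>m. \<forall>a\<ge>m. \<forall>b. (\<forall>n\<ge>m. h n (k, Pt a b) = hinf (k, Top)) \<and> hinf (k, Pt a b) = hinf (k, Top)"
  proof (rule ccontr)
    assume neg: "\<not> ?thesis"
    have "\<forall>m. \<exists>t::nat\<times>nat\<times>nat. fst t \<ge> m \<and> fst (snd t) \<ge> m \<and>
                  h (fst t) (k, Pt (fst (snd t)) (snd (snd t))) \<noteq> c"
    proof
      fix m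
      from neg obtain a b where ab: "a \<ge> max m N"
        "\<not> ((\<forall>n\<ge>max m N. h n (k, Pt a b) = c) \<and> hinf (k, Pt a b) = c)"
        unfolding c_def by blast
      then obtain n where "n \<ge> max m N" "h n (k, Pt a b) \<noteq> c" using N by auto
      then show "\<exists>t::nat\<times>nat\<times>nat. fst t \<ge> m \<and> fst (snd t) \<ge> m \<and>
                  h (fst t) (k, Pt (fst (snd t)) (snd (snd t))) \<noteq> c"
        using ab(1) by (intro exI[of _ "(n, a, b)"]) auto
    qed
    then obtain t where t: "\<And>m. fst (t m) \<ge> m" "\<And>m. fst (snd (t m)) \<ge> m"
      "\<And>m. h (fst (t m)) (k, Pt (fst (snd (t m))) (snd (snd (t m)))) \<noteq> c"
      by metis
    define \<sigma> where "\<sigma> m = Pt (fst (snd (t (m + N)))) (snd (snd (t (m + N))))" for m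
    have lim: "limitin fan_topology \<sigma> Top sequentially"
      unfolding fan_topology_def F.limitin_metric
    proof (intro conjI allI impI)
      fix e :: real assume "e > 0"
      then obtain P where P: "\<forall>a\<ge>P. (1/2::real)^a < e" using pow_small by blast
      show "\<forall>\<^sub>F x in sequentially. \<sigma> x \<in> UNIV \<and> fan_dist (\<sigma> x) Top < e"
        unfolding eventually_sequentially
      proof (intro exI[of _ P] allI impI)
        fix m assume "P \<le> m"
        then have "fst (snd (t (m + N))) \<ge> P" using t(2)[of "m+N"] by linarith
        then show "\<sigma> m \<in> UNIV \<and> fan_dist (\<sigma> m) Top < e" using P by (simp add: \<sigma>_def)
      qed
    qed simp
    define K where "K = insert Top (range \<sigma>)"
    have cK: "compactin fan_topology K"
      unfolding K_def by (rule compactin_sequence_with_limit[OF lim]) (auto simp: topF)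
    have cKk: "compactin NxF ({k} \<times> K)"
      unfolding NxF_def compactin_Times using cK by (auto intro: finite_imp_compactin)
    define W where "W = {f. f ` ({k} \<times> K) \<subseteq> {c}} \<inter> {f. continuous_map NxF two f}"
    have "openin (topology_generated_by {{f. f ` K \<subseteq> U} | K U. compactin NxF K \<and> openin two U})
            {f. f ` ({k} \<times> K) \<subseteq> {c}}"
      unfolding openin_topology_generated_by_iff
      by (rule generate_topology_on.Basis) (use cKk in \<open>auto simp: two_def\<close>)
    then have oW: "openin (compact_open NxF two) W"
      unfolding compact_open_def W_def openin_subtopology by blast
    have hs: "hinf (k, \<sigma> m) = c" for m
    proof -
      have "N \<le> fst (snd (t (m + N)))" using t(2)[of "m+N"] by linarith
      then show ?thesis using N by (simp add: \<sigma>_def)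
    qed
    have "hinf \<in> W"
      unfolding W_def K_def using hc hs by (auto simp: c_def)
    then have "\<forall>\<^sub>F n in sequentially. h n \<in> W"
      using seq_lim[OF assms(3)[unfolded qcb_exp_def] oW] by blast
    then obtain M0 where M0: "\<And>n. n \<ge> M0 \<Longrightarrow> h n \<in> W"
      unfolding eventually_sequentially by blast
    have "h (fst (t (M0 + N))) \<in> W" using M0 t(1)[of "M0+N"] by simp
    moreover have "(k, \<sigma> M0) \<in> {k} \<times> K" unfolding K_def by simp
    ultimately have "h (fst (t (M0 + N))) (k, \<sigma> M0) = c" unfolding W_def by blast
    then show False using t(3)[of "M0+N"] by (simp add: \<sigma>_def)
  qed
qed

end
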